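(* Let $\{(X_i,d_i)\}_{i\in\mathbb{N}_0}$ be complete metric spaces, $C_i\subseteq X_i$ nonempty compact sets with $\mathrm{diam}(C_i)\le D$ for all $i$, and $T_i:X_i\to X_{i-1}$ ($i\in\mathbb{N}$) continuous maps with $T_i(C_i)\subseteq C_{i-1}$ and $s_i:=\mathrm{Lip}_{C_i}(T_i)<\infty$. If $\sum_{k=1}^\infty\prod_{i=1}^k s_i<\infty$, then there is a point $p\in C_0$ such that for every base sequence $\bar x$ the backward staircase trajectory $p_k(\bar x)$ converges to $p$.
   Context: For $T:X\to Y$ between metric spaces and $C\subseteq X$, $\mathrm{Lip}_C(T)=\sup_{a,b\in C,a\neq b}d_Y(T(a),T(b))/d_X(a,b)$. A base sequence is $\bar x=\{x_i\}_{i\in\mathbb{N}}$ with $x_i\in C_i$, and the backward staircase trajectory with respect to $\bar x$ is $p_k(\bar x)=T_1\circ T_2\circ\cdots\circ T_k(x_k)\in X_0$, $k\in\mathbb{N}$. *)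

theory Defs
  imports "HOL-Analysis.Analysis"
begin

definition lip_quotients :: "('a \<Rightarrow> 'a \<Rightarrow> real) \<Rightarrow> ('b \<Rightarrow> 'b \<Rightarrow> real) \<Rightarrow> ('a \<Rightarrow> 'b) \<Rightarrow> 'a set \<Rightarrow> real set" where
  "lip_quotients dX dY T C = {dY (T a) (T b) / dX a b | a b. a \<in> C \<and> b \<in> C \<and> a \<noteq> b}"

text \<open>Lip_C(T) = sup of the difference quotients; the supremum of the empty set is taken to be 0.
  Finiteness of Lip_C(T) is expressed separately by boundedness of the quotient set.\<close>
definition Lip_on :: "('a \<Rightarrow> 'a \<Rightarrow> real) \<Rightarrow> ('b \<Rightarrow> 'b \<Rightarrow> real) \<Rightarrow> ('a \<Rightarrow> 'b) \<Rightarrow> 'a set \<Rightarrow> real" where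
  "Lip_on dX dY T C = (if lip_quotients dX dY T C = {} then 0 else Sup (lip_quotients dX dY T C))"

fun back_comp :: "(nat \<Rightarrow> 'a \<Rightarrow> 'a) \<Rightarrow> nat \<Rightarrow> 'a \<Rightarrow> 'a" where
  "back_comp T 0 = id"
| "back_comp T (Suc k) = back_comp T k \<circ> T (Suc k)"

definition staircase :: "(nat \<Rightarrow> 'a \<Rightarrow> 'a) \<Rightarrow> (nat \<Rightarrow> 'a) \<Rightarrow> nat \<Rightarrow> 'a" where
  "staircase T x k = back_comp T k (x k)"

end

theory Submission
  imports Defs
begin

lemma lip_bound:
  assumes bdd: "bdd_above (lip_quotients (mdist A) (mdist B) f S)"
    and S: "S \<subseteq> mspace A" and fS: "f ` S \<subseteq> mspace B" and a: "a \<in> S" and b: "b \<in> S"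
  shows "mdist B (f a) (f b) \<le> Lip_on (mdist A) (mdist B) f S * mdist A a b"
proof (cases "a = b")
  case True
  have "f b \<in> mspace B" "b \<in> mspace A" using b S fS by auto
  then have "mdist B (f b) (f b) = 0" "mdist A b b = 0" by (metis Metric_space.mdist_zero Metric_space_mspace_mdist)+
  then show ?thesis using True by simp
next
  case False
  let ?q = "mdist B (f a) (f b) / mdist A a b"
  have q: "?q \<in> lip_quotients (mdist A) (mdist B) f S"
    unfolding lip_quotients_def using a b False by blast
  then have ne: "lip_quotients (mdist A) (mdist B) f S \<noteq> {}" by blast
  have "?q \<le> Lip_on (mdist A) (mdist B) f S"
    unfolding Lip_on_def using ne cSup_upper[OF q bdd] by simp
  moreover have pos: "0 < mdist A a b"
    using False a b S by (meson Metric_space.mdist_pos_less Metric_space_mspace_mdist subsetD)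
  ultimately show ?thesis by (simp add: divide_le_eq)
qed

lemma Lip_nonneg: assumes bdd: "bdd_above (lip_quotients (mdist A) (mdist B) f S)" shows "0 \<le> Lip_on (mdist A) (mdist B) f S"
proof (cases "lip_quotients (mdist A) (mdist B) f S = {}")
  case True then show ?thesis by (simp add: Lip_on_def)
next
  case False
  then obtain q where q: "q \<in> lip_quotients (mdist A) (mdist B) f S" by blast
  have "0 \<le> q" using q unfolding lip_quotients_def by auto
  moreover have "\<forall>x\<in>lip_quotients (mdist A) (mdist B) f S. 0 \<le> x"
    unfolding lip_quotients_def by auto
  ultimately show ?thesis using False unfolding Lip_on_def
    using cSup_upper2[OF q _ bdd, of 0] by simp
qed

theorem mainTheorem7:
  fixes X :: "nat \<Rightarrow> 'a metric"
    and C :: "nat \<Rightarrow> 'a set"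
    and T :: "nat \<Rightarrow> 'a \<Rightarrow> 'a"
    and D :: real
  assumes complete: "\<And>i. mcomplete_of (X i)"
    and C_sub: "\<And>i. C i \<subseteq> mspace (X i)"
    and C_ne: "\<And>i. C i \<noteq> {}"
    and C_compact: "\<And>i. compactin (mtopology_of (X i)) (C i)"
    and C_diam: "\<And>i a b. a \<in> C i \<Longrightarrow> b \<in> C i \<Longrightarrow> mdist (X i) a b \<le> D"
    and T_cont: "\<And>i. i \<ge> 1 \<Longrightarrow> continuous_map (mtopology_of (X i)) (mtopology_of (X (i - 1))) (T i)"
    and T_C: "\<And>i. i \<ge> 1 \<Longrightarrow> T i ` C i \<subseteq> C (i - 1)"
    and Lip_fin: "\<And>i. i \<ge> 1 \<Longrightarrow> bdd_above (lip_quotients (mdist (X i)) (mdist (X (i - 1))) (T i) (C i))"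
    and summ: "summable (\<lambda>k. \<Prod>i\<in>{1..Suc k}. Lip_on (mdist (X i)) (mdist (X (i - 1))) (T i) (C i))"
  shows "\<exists>p \<in> C 0. \<forall>x. (\<forall>i\<ge>1. x i \<in> C i) \<longrightarrow>
           limitin (mtopology_of (X 0)) (staircase T x) p sequentially"
proof -
  define s where "s i = Lip_on (mdist (X i)) (mdist (X (i - 1))) (T i) (C i)" for i
  define P where "P k = (\<Prod>i\<in>{1..k}. s i)" for k
  have s0: "0 \<le> s i" if "i \<ge> 1" for i unfolding s_def by (rule Lip_nonneg[OF Lip_fin[OF that]])
  have P0: "0 \<le> P k" for k unfolding P_def by (rule prod_nonneg) (auto intro: s0)
  have Ts: "T i a \<in> C (i - 1)" if "i \<ge> 1" "a \<in> C i" for i a using T_C that by blast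
  have Tlip: "mdist (X (i - 1)) (T i a) (T i b) \<le> s i * mdist (X i) a b"
    if "i \<ge> 1" "a \<in> C i" "b \<in> C i" for i a b
    unfolding s_def
  proof (rule lip_bound[OF Lip_fin[OF that(1)] C_sub _ that(2,3)])
    show "T i ` C i \<subseteq> mspace (X (i - 1))" using T_C[OF that(1)] C_sub by blast
  qed
  have B: "back_comp T k a \<in> C 0 \<and> (\<forall>b\<in>C k. mdist (X 0) (back_comp T k a) (back_comp T k b) \<le> P k * mdist (X k) a b)"
    if "a \<in> C k" for k a
    using that
  proof (induction k arbitrary: a)
    case 0
    then show ?case by (simp add: P_def)
  next
    case (Suc k)
    have Ta: "T (Suc k) a \<in> C k" using Ts[of "Suc k" a] Suc.prems by simp
    note IH = Suc.IH[OF Ta]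
    show ?case
    proof (intro conjI ballI)
      show "back_comp T (Suc k) a \<in> C 0" using IH by simp
      fix b assume b: "b \<in> C (Suc k)"
      have Tb: "T (Suc k) b \<in> C k" using Ts[of "Suc k" b] b by simp
      have "mdist (X 0) (back_comp T (Suc k) a) (back_comp T (Suc k) b)
          = mdist (X 0) (back_comp T k (T (Suc k) a)) (back_comp T k (T (Suc k) b))" by simp
      also have "\<dots> \<le> P k * mdist (X k) (T (Suc k) a) (T (Suc k) b)" using IH Tb by blast
      also have "\<dots> \<le> P k * (s (Suc k) * mdist (X (Suc k)) a b)"
        using Tlip[of "Suc k" a b] Suc.prems b P0 by (simp add: mult_left_mono)
      also have "\<dots> = P (Suc k) * mdist (X (Suc k)) a b"
        unfolding P_def by (simp add: prod.nat_ivl_Suc' mult_ac)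
      finally show "mdist (X 0) (back_comp T (Suc k) a) (back_comp T (Suc k) b) \<le> P (Suc k) * mdist (X (Suc k)) a b" .
    qed
  qed
  have D0: "0 \<le> D" using C_ne[of 0] C_diam[of _ 0] mdist_nonneg by (meson all_not_in_conv order_trans)
  have Psum: "summable P"
    using summ unfolding P_def s_def[symmetric] by (subst summable_Suc_iff[symmetric]) simp
  have DPsum: "summable (\<lambda>k. D * P k)" using Psum by (rule summable_mult)
  have P_lim: "P \<longlonglongrightarrow> 0" using Psum by (rule summable_LIMSEQ_zero)
  interpret M0: Metric_space "mspace (X 0)" "mdist (X 0)" by simp
  have top0: "mtopology_of (X 0) = M0.mtopology" by (simp add: mtopology_of_def)
  have comp0: "M0.mcomplete" using complete[of 0] by (simp add: mcomplete_of_def)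
  have closed0: "closedin M0.mtopology (C 0)"
    using C_compact[of 0] top0 by (metis compactin_imp_closedin M0.Hausdorff_space_mtopology)
  have stC: "staircase T x k \<in> C 0" if x: "\<forall>i\<ge>1. x i \<in> C i" "k \<ge> 1" for x k
    using B[of "x k" k] x unfolding staircase_def by auto
  have cross: "mdist (X 0) (staircase T x k) (staircase T y k) \<le> D * P k"
    if x: "\<forall>i\<ge>1. x i \<in> C i" and y: "\<forall>i\<ge>1. y i \<in> C i" and k: "k \<ge> 1" for x y k
  proof -
    have "mdist (X 0) (staircase T x k) (staircase T y k) \<le> P k * mdist (X k) (x k) (y k)"
      using B[of "x k" k] x y k unfolding staircase_def by auto
    also have "\<dots> \<le> P k * D" using C_diam[of "x k" k "y k"] x y k P0 by (simp add: mult_left_mono)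
    finally show ?thesis by (simp add: mult_ac)
  qed
  have stepb: "mdist (X 0) (staircase T x k) (staircase T x (Suc k)) \<le> D * P k"
    if x: "\<forall>i\<ge>1. x i \<in> C i" and k: "k \<ge> 1" for x k
  proof -
    have xk: "x k \<in> C k" "x (Suc k) \<in> C (Suc k)" using x k by auto
    have Tx: "T (Suc k) (x (Suc k)) \<in> C k" using Ts[of "Suc k"] xk by simp
    have "mdist (X 0) (staircase T x k) (staircase T x (Suc k))
        = mdist (X 0) (back_comp T k (x k)) (back_comp T k (T (Suc k) (x (Suc k))))"
      by (simp add: staircase_def)
    also have "\<dots> \<le> P k * mdist (X k) (x k) (T (Suc k) (x (Suc k)))" using B[OF xk(1)] Tx by blast
    also have "\<dots> \<le> P k * D" using C_diam[OF xk(1) Tx] P0 by (simp add: mult_left_mono)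
    finally show ?thesis by (simp add: mult_ac)
  qed
  have tail: "mdist (X 0) (staircase T x m) (staircase T x n) \<le> (\<Sum>k\<in>{m..<n}. D * P k)"
    if x: "\<forall>i\<ge>1. x i \<in> C i" and m: "m \<ge> 1" and mn: "m \<le> n" for x m n
    using mn
  proof (induction n rule: dec_induct)
    case base
    have "staircase T x m \<in> mspace (X 0)" using stC[OF x m] C_sub by blast
    then show ?case by simp
  next
    case (step n)
    have "mdist (X 0) (staircase T x m) (staircase T x (Suc n))
       \<le> mdist (X 0) (staircase T x m) (staircase T x n) + mdist (X 0) (staircase T x n) (staircase T x (Suc n))"
    proof (rule M0.triangle)
      have "\<And>k. k \<ge> 1 \<Longrightarrow> staircase T x k \<in> mspace (X 0)" using stC[OF x] C_sub by blast
      then show "staircase T x m \<in> mspace (X 0)" "staircase T x n \<in> mspace (X 0)"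
        "staircase T x (Suc n) \<in> mspace (X 0)" using m step.hyps by auto
    qed
    also have "\<dots> \<le> (\<Sum>k\<in>{m..<n}. D * P k) + D * P n"
    proof (rule add_mono[OF step.IH])
      show "mdist (X 0) (staircase T x n) (staircase T x (Suc n)) \<le> D * P n"
        using stepb[OF x] step.hyps m by simp
    qed
    also have "\<dots> = (\<Sum>k\<in>{m..<Suc n}. D * P k)" using step.hyps by simp
    finally show ?case .
  qed
  have conv: "\<exists>p \<in> C 0. limitin M0.mtopology (staircase T x) p sequentially"
    if x: "\<forall>i\<ge>1. x i \<in> C i" for x
  proof -
    have "M0.MCauchy (\<lambda>n. staircase T x (Suc n))"
      unfolding M0.MCauchy_def
    proof (intro conjI allI impI)
      show "range (\<lambda>n. staircase T x (Suc n)) \<subseteq> mspace (X 0)"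
      proof (rule image_subsetI)
        fix n have "staircase T x (Suc n) \<in> C 0" using stC[OF x, of "Suc n"] by simp
        then show "staircase T x (Suc n) \<in> mspace (X 0)" using C_sub[of 0] by blast
      qed
      fix e :: real assume e: "e > 0"
      obtain N where N: "\<And>m n. m \<ge> N \<Longrightarrow> norm (\<Sum>k\<in>{m..<n}. D * P k) < e"
        using summable_Cauchy[THEN iffD1, OF DPsum] e by blast
      show "\<exists>N. \<forall>n n'. N \<le> n \<longrightarrow> N \<le> n' \<longrightarrow> mdist (X 0) (staircase T x (Suc n)) (staircase T x (Suc n')) < e"
      proof (intro exI allI impI)
        fix n n' assume nn: "N \<le> n" "N \<le> n'"
        have gen: "mdist (X 0) (staircase T x (Suc a)) (staircase T x (Suc b)) < e" if "N \<le> a" "a \<le> b" for a b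
        proof -
          have "mdist (X 0) (staircase T x (Suc a)) (staircase T x (Suc b)) \<le> (\<Sum>k\<in>{Suc a..<Suc b}. D * P k)"
            using tail[OF x, of "Suc a" "Suc b"] that(2) by simp
          also have "\<dots> \<le> norm (\<Sum>k\<in>{Suc a..<Suc b}. D * P k)" by simp
          also have "\<dots> < e" using N[of "Suc a" "Suc b"] that(1) by simp
          finally show ?thesis .
        qed
        show "mdist (X 0) (staircase T x (Suc n)) (staircase T x (Suc n')) < e"
        proof (cases "n \<le> n'")
          case True then show ?thesis using gen[of n n'] nn by simp
        next
          case False then have "mdist (X 0) (staircase T x (Suc n')) (staircase T x (Suc n)) < e" using gen[of n' n] nn by simp
          then show ?thesis by (simp add: M0.commute)
        qed
      qed
    qed
    then obtain p where p: "limitin M0.mtopology (\<lambda>n. staircase T x (Suc n)) p sequentially"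
      using comp0 unfolding M0.mcomplete_def by blast
    then have p': "limitin M0.mtopology (staircase T x) p sequentially"
      using limitin_sequentially_offset_rev[of M0.mtopology "staircase T x" 1 p] p by simp
    have "p \<in> C 0"
    proof (rule limitin_closedin[OF p' closed0])
      show "eventually (\<lambda>n. staircase T x n \<in> C 0) sequentially"
        using eventually_ge_at_top[of "1::nat"] by (rule eventually_mono) (rule stC[OF x])
    qed simp
    then show ?thesis using p' by blast
  qed
  define x0 where "x0 i = (SOME a. a \<in> C i)" for i
  have x0: "\<forall>i\<ge>1. x0 i \<in> C i"
  proof (intro allI impI)
    fix i :: nat show "x0 i \<in> C i" unfolding x0_def using C_ne[of i] by (simp add: some_in_eq)
  qed
  obtain p where p: "p \<in> C 0" and lim0: "limitin M0.mtopology (staircase T x0) p sequentially"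
    using conv[OF x0] by blast
  show ?thesis
  proof (intro bexI[OF _ p] allI impI)
    fix x assume x: "\<forall>i\<ge>1. x i \<in> C i"
    have DP: "(\<lambda>k. D * P k) \<longlonglongrightarrow> 0" using tendsto_mult_right_zero[OF P_lim] by simp
    show "limitin (mtopology_of (X 0)) (staircase T x) p sequentially"
      unfolding top0 M0.limitin_metric
    proof (intro conjI allI impI)
      show "p \<in> mspace (X 0)" using p C_sub by blast
      fix e :: real assume e: "e > 0"
      have e2: "e/2 > 0" using e by simp
      have ev1: "eventually (\<lambda>k. staircase T x0 k \<in> mspace (X 0) \<and> mdist (X 0) (staircase T x0 k) p < e/2) sequentially"
        using lim0 e2 unfolding M0.limitin_metric by blast
      have ev2: "eventually (\<lambda>k. D * P k < e/2) sequentially"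
        using order_tendstoD(2)[OF DP e2] by simp
      have ev3: "eventually (\<lambda>k. k \<ge> 1) sequentially" by (simp add: eventually_ge_at_top)
      show "eventually (\<lambda>k. staircase T x k \<in> mspace (X 0) \<and> mdist (X 0) (staircase T x k) p < e) sequentially"
        using ev1 ev2 ev3
      proof eventually_elim
        case (elim k)
        have sx: "staircase T x k \<in> mspace (X 0)" using stC[OF x elim(3)] C_sub by blast
        have "mdist (X 0) (staircase T x k) p \<le> mdist (X 0) (staircase T x k) (staircase T x0 k) + mdist (X 0) (staircase T x0 k) p"
          using sx elim(1) \<open>p \<in> mspace (X 0)\<close> by (intro M0.triangle) auto
        also have "\<dots> < e" using cross[OF x x0 elim(3)] elim by linarith
        finally show ?case using sx by simp
      qed
    qed
  qed
qed

end
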